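(* Let $n\ge 1$ be an integer. There exist a tensor $A\in\mathbb{C}^{2n\times 2n\times 2}$ with $\operatorname{rank}(A)=3n$ and a sequence of tensors $(A_k)_{k\in\mathbb{N}}\subset\mathbb{C}^{2n\times 2n\times 2}$ with $\operatorname{rank}(A_k)=2n$ for every $k$, such that $A_k\to A$ as $k\to\infty$ in the Euclidean (entrywise) topology.
   Context: $\mathbb{C}^{l\times m\times p}$ is the space of complex arrays $(a_{ijk})$ of size $l\times m\times p$. For vectors $\mathbf{x},\mathbf{y},\mathbf{z}$ of appropriate sizes, $\mathbf{x}\otimes\mathbf{y}\otimes\mathbf{z}=(x_iy_jz_k)$ is an elementary tensor. The tensor rank of a tensor is the least number of elementary tensors (over $\mathbb{C}$) whose sum equals it. *)

theory Defs
  imports "HOL-Analysis.Analysis"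
begin

text \<open>A tensor in C^{l x m x p} is represented as a function
  nat => nat => nat => complex; only entries with i < l, j < m, k < p matter.
  Indices are 0-based.\<close>

type_synonym tensor3 = "nat \<Rightarrow> nat \<Rightarrow> nat \<Rightarrow> complex"

definition sum_of_elementary ::
  "nat \<Rightarrow> nat \<Rightarrow> nat \<Rightarrow> nat \<Rightarrow> tensor3 \<Rightarrow> bool" where
  "sum_of_elementary l m p r T \<longleftrightarrow>
     (\<exists>x y z :: nat \<Rightarrow> nat \<Rightarrow> complex.
        \<forall>i<l. \<forall>j<m. \<forall>k<p. T i j k = (\<Sum>s<r. x s i * y s j * z s k))"

definition tensor_rank :: "nat \<Rightarrow> nat \<Rightarrow> nat \<Rightarrow> tensor3 \<Rightarrow> nat" where
  "tensor_rank l m p T = (LEAST r. sum_of_elementary l m p r T)"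

definition tensor_converges ::
  "nat \<Rightarrow> nat \<Rightarrow> nat \<Rightarrow> (nat \<Rightarrow> tensor3) \<Rightarrow> tensor3 \<Rightarrow> bool" where
  "tensor_converges l m p As A \<longleftrightarrow>
     (\<forall>i<l. \<forall>j<m. \<forall>k<p. (\<lambda>t. As t i j k) \<longlonglongrightarrow> A i j k)"

end

theory Submission
  imports Defs "HOL-Library.Function_Algebras"
begin

lemma homog:
  fixes M :: "'a \<Rightarrow> nat \<Rightarrow> complex"
  assumes "finite R" "card R < k"
  shows "\<exists>\<beta>. (\<exists>j<k. \<beta> j \<noteq> 0) \<and> (\<forall>i\<in>R. (\<Sum>j<k. M i j * \<beta> j) = 0)"
  using assms
proof (induction k arbitrary: R M)
  case 0
  then show ?case by simp
next
  case (Suc k)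
  show ?case
  proof (cases "\<forall>i\<in>R. M i k = 0")
    case True
    show ?thesis
      by (rule exI[of _ "\<lambda>j. if j = k then 1 else 0"]) (auto simp: True if_distrib cong: if_cong)
  next
    case False
    then obtain i0 where i0: "i0 \<in> R" "M i0 k \<noteq> 0" by blast
    define R' where "R' = R - {i0}"
    have fR': "finite R'" using Suc.prems by (simp add: R'_def)
    have cR': "card R' < k" using Suc.prems i0 card_gt_0_iff[of R] by (auto simp: R'_def)
    define M' where "M' i j = M i j - M i k * M i0 j / M i0 k" for i j
    obtain \<beta>' where b': "\<exists>j<k. \<beta>' j \<noteq> 0" "\<forall>i\<in>R'. (\<Sum>j<k. M' i j * \<beta>' j) = 0"
      using Suc.IH[OF fR' cR', of M'] by blast
    define S0 where "S0 = (\<Sum>j<k. M i0 j * \<beta>' j)"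
    define \<beta> where "\<beta> j = (if j < k then \<beta>' j else - S0 / M i0 k)" for j
    have row: "(\<Sum>j<Suc k. M i j * \<beta> j) = (\<Sum>j<k. M i j * \<beta>' j) - M i k * S0 / M i0 k" for i
      by (simp add: \<beta>_def)
    show ?thesis
    proof (rule exI[of _ \<beta>], intro conjI ballI)
      show "\<exists>j<Suc k. \<beta> j \<noteq> 0" using b'(1) by (auto simp: \<beta>_def)
    next
      fix i assume i: "i \<in> R"
      show "(\<Sum>j<Suc k. M i j * \<beta> j) = 0"
      proof (cases "i = i0")
        case True
        then show ?thesis unfolding row using i0 by (simp add: S0_def)
      next
        case False
        then have "i \<in> R'" using i by (simp add: R'_def)
        then have "(\<Sum>j<k. M' i j * \<beta>' j) = 0" using b'(2) by blast
        moreover have "(\<Sum>j<k. M' i j * \<beta>' j) = (\<Sum>j<k. M i j * \<beta>' j) - M i k * S0 / M i0 k"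
          by (simp add: M'_def S0_def algebra_simps sum_subtractf sum_distrib_left sum_divide_distrib)
        ultimately show ?thesis unfolding row by simp
      qed
    qed
  qed
qed

definition sc :: "complex \<Rightarrow> (nat \<Rightarrow> complex) \<Rightarrow> (nat \<Rightarrow> complex)" where
  "sc c v = (\<lambda>i. c * v i)"

interpretation V: vector_space sc
  by unfold_locales (auto simp: sc_def fun_eq_iff algebra_simps)

lemma sc_apply[simp]: "sc c v i = c * v i" by (simp add: sc_def)

lemma sum_fun_apply: "(sum f A) i = (\<Sum>a\<in>A. f a i)" for f :: "'a \<Rightarrow> nat \<Rightarrow> complex"
  by (induction A rule: infinite_finite_induct) auto

lemma module_sc: "module sc"
  using V.vector_space_axioms module_iff_vector_space by blast

definition Jm :: "nat \<Rightarrow> nat \<Rightarrow> complex" where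
  "Jm i j = (if even i \<and> j = Suc i then 1 else 0)"

lemma even_lt: "even i \<Longrightarrow> i < 2*n \<Longrightarrow> Suc i < 2*n"
  by (auto elim!: evenE)

definition ev :: "nat \<Rightarrow> nat \<Rightarrow> complex" where "ev j = (\<lambda>i. if i = j then 1 else 0)"

locale LB =
  fixes n r :: nat and x y z :: "nat \<Rightarrow> nat \<Rightarrow> complex"
  assumes H0: "\<And>i j. i < 2*n \<Longrightarrow> j < 2*n \<Longrightarrow> (\<Sum>s<r. x s i * y s j * z s 0) = (if i = j then 1 else 0)"
    and H1: "\<And>i j. i < 2*n \<Longrightarrow> j < 2*n \<Longrightarrow> (\<Sum>s<r. x s i * y s j * z s 1) = Jm i j"
begin

definition phi :: "nat \<Rightarrow> (nat \<Rightarrow> complex) \<Rightarrow> complex" where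
  "phi s u = (\<Sum>j<2*n. y s j * u j)"

definition Jv :: "(nat \<Rightarrow> complex) \<Rightarrow> (nat \<Rightarrow> complex)" where
  "Jv u = (\<lambda>i. if i < 2*n \<and> even i then u (Suc i) else 0)"

definition f :: "(nat \<Rightarrow> complex) \<Rightarrow> (nat \<Rightarrow> complex)" where
  "f u = (\<lambda>s. if s < r then z s 1 * phi s u - z s 0 * phi s (Jv u) else 0)"

lemma Xk: "(\<Sum>s<r. x s i * (z s k * phi s u)) = (\<Sum>j<2*n. (\<Sum>s<r. x s i * y s j * z s k) * u j)"
proof -
  have "(\<Sum>s<r. x s i * (z s k * phi s u)) = (\<Sum>s<r. \<Sum>j<2*n. x s i * y s j * z s k * u j)"
    by (simp add: phi_def sum_distrib_left mult_ac)
  also have "\<dots> = (\<Sum>j<2*n. \<Sum>s<r. x s i * y s j * z s k * u j)" by (rule sum.swap)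
  also have "\<dots> = (\<Sum>j<2*n. (\<Sum>s<r. x s i * y s j * z s k) * u j)" by (simp add: sum_distrib_right)
  finally show ?thesis .
qed

lemma X0: "i < 2*n \<Longrightarrow> (\<Sum>s<r. x s i * (z s 0 * phi s u)) = u i"
proof -
  assume i: "i < 2*n"
  have "(\<Sum>j<2*n. (\<Sum>s<r. x s i * y s j * z s 0) * u j) = (\<Sum>j<2*n. if i = j then u j else 0)"
    by (rule sum.cong) (auto simp: H0 i)
  then show ?thesis unfolding Xk using i by simp
qed

lemma X1: "i < 2*n \<Longrightarrow> (\<Sum>s<r. x s i * (z s 1 * phi s u)) = Jv u i"
proof -
  assume i: "i < 2*n"
  have "(\<Sum>j<2*n. (\<Sum>s<r. x s i * y s j * z s 1) * u j) = (\<Sum>j<2*n. if Suc i = j then (if even i then u j else 0) else 0)"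
    by (rule sum.cong) (use H1[OF i] in \<open>auto simp: Jm_def\<close>)
  then show ?thesis unfolding Xk using i even_lt[of i n] by (simp add: Jv_def)
qed

lemma F1: "i < 2*n \<Longrightarrow> (\<Sum>s<r. x s i * f u s) = 0"
proof -
  assume i: "i < 2*n"
  have "(\<Sum>s<r. x s i * f u s) = (\<Sum>s<r. x s i * (z s 1 * phi s u)) - (\<Sum>s<r. x s i * (z s 0 * phi s (Jv u)))"
    by (simp add: f_def algebra_simps sum_subtractf)
  then show ?thesis using X0[OF i] X1[OF i] by simp
qed

lemma JJ: "Jv (Jv u) = 0"
  by (simp add: Jv_def fun_eq_iff)

lemma phi0: "phi s 0 = 0" by (simp add: phi_def)

lemma KEY:
  assumes "Jv k = 0" "f u = f k" "f (Jv u) = 0"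
  shows "Jv u = 0"
proof -
  have z: "z s 0 * phi s (Jv u) = 0" if s: "s < r" for s
  proof -
    have e1: "z s 1 * phi s u - z s 0 * phi s (Jv u) = z s 1 * phi s k"
      using fun_cong[OF assms(2), of s] s assms(1) by (simp add: f_def phi0)
    have e2: "z s 1 * phi s (Jv u) = 0"
      using fun_cong[OF assms(3), of s] s by (simp add: f_def JJ phi0)
    show ?thesis
    proof (cases "z s 1 = 0")
      case True then show ?thesis using e1 by simp
    next
      case False then show ?thesis using e2 by simp
    qed
  qed
  show ?thesis
  proof
    fix i
    show "Jv u i = 0 i"
    proof (cases "i < 2*n")
      case True
      then have "Jv u i = (\<Sum>s<r. x s i * (z s 0 * phi s (Jv u)))" using X0 by simp
      also have "\<dots> = 0" by (intro sum.neutral) (simp add: z)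
      finally show ?thesis by simp
    next
      case False then show ?thesis by (simp add: Jv_def)
    qed
  qed
qed

lemma phi_add: "phi s (a + b) = phi s a + phi s b"
  by (simp add: phi_def algebra_simps sum.distrib)
lemma phi_sc: "phi s (sc c a) = c * phi s a"
  by (simp add: phi_def sum_distrib_left mult_ac)

lemma Jv_add: "Jv (a + b) = Jv a + Jv b" by (simp add: Jv_def fun_eq_iff)
lemma Jv_sc: "Jv (sc c a) = sc c (Jv a)" by (simp add: Jv_def fun_eq_iff)

lemma f_add: "f (a + b) = f a + f b"
  by (simp add: f_def fun_eq_iff Jv_add phi_add algebra_simps)
lemma f_sc: "f (sc c a) = sc c (f a)"
  by (simp add: f_def fun_eq_iff Jv_sc phi_sc algebra_simps)

lemma lin_f: "module_hom sc sc f"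
  unfolding module_hom_iff using module_sc f_add f_sc by blast
lemma lin_Jv: "module_hom sc sc Jv"
  unfolding module_hom_iff using module_sc Jv_add Jv_sc by blast


lemma Jv_odd: "i < n \<Longrightarrow> Jv (ev (Suc (2*i))) = ev (2*i)"
  by (auto simp: Jv_def ev_def fun_eq_iff)
lemma Jv_even: "Jv (ev (2*i)) = 0"
  by (auto simp: Jv_def ev_def fun_eq_iff) presburger

lemma f_supp: "s \<ge> r \<Longrightarrow> f u s = 0" by (simp add: f_def)

lemma card_B:
  fixes B BG :: "(nat \<Rightarrow> complex) set"
  defines "PV \<equiv> (\<lambda>i. f (ev (2*i))) ` {..<n}"
  defines "PW \<equiv> (\<lambda>i. f (ev (Suc (2*i)))) ` {..<n}"
  assumes BGsub: "BG \<subseteq> PV" and BGind: "V.independent BG" and PVBG: "PV \<subseteq> V.span BG"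
    and BGB: "BG \<subseteq> B" and Bsub: "B \<subseteq> PV \<union> PW" and Bind: "V.independent B"
    and PVWB: "PV \<union> PW \<subseteq> V.span B"
  shows "n \<le> card B"
proof (rule ccontr)
  assume "\<not> n \<le> card B"
  then have cB: "card B < n" by simp
  have finB: "finite B" using Bsub finite_subset by (auto simp: PV_def PW_def)
  define vv where "vv i = f (ev (2*i))" for i
  define ww where "ww i = f (ev (Suc (2*i)))" for i
  define rep where "rep = V.representation B"
  define M where "M b i = (if b \<in> BG then rep (vv i) b else rep (ww i) b)" for b i
  obtain \<beta> where b1: "\<exists>j<n. \<beta> j \<noteq> 0" and b2: "\<forall>b\<in>B. (\<Sum>j<n. M b j * \<beta> j) = 0"
    using homog[OF finB cB, of M] by blast
  define h where "h = (\<Sum>i<n. sc (\<beta> i) (ev (Suc (2*i))))"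
  have Jh: "Jv h = (\<Sum>i<n. sc (\<beta> i) (ev (2*i)))"
    unfolding h_def module_hom.sum[OF lin_Jv] by (rule sum.cong) (auto simp: Jv_sc Jv_odd)
  have fJh: "f (Jv h) = (\<Sum>i<n. sc (\<beta> i) (vv i))"
    unfolding Jh module_hom.sum[OF lin_f] by (simp add: f_sc vv_def)
  have fh: "f h = (\<Sum>i<n. sc (\<beta> i) (ww i))"
    unfolding h_def module_hom.sum[OF lin_f] by (simp add: f_sc ww_def)
  have vvBG: "vv i \<in> V.span BG" if "i < n" for i
    using PVBG that by (auto simp: PV_def vv_def)
  have vvB: "vv i \<in> V.span B" if "i < n" for i
    using PVWB that by (auto simp: PV_def vv_def)
  have wwB: "ww i \<in> V.span B" if "i < n" for i
    using PVWB that by (auto simp: PW_def ww_def)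
  have repv0: "rep (vv i) b = 0" if "i < n" "b \<notin> BG" for i b
  proof -
    have "rep (vv i) = V.representation BG (vv i)"
      unfolding rep_def by (rule V.representation_extend[OF Bind vvBG[OF that(1)] BGB])
    then show ?thesis using V.representation_ne_zero[of BG "vv i" b] that(2) by auto
  qed
  have rep_sum: "rep (\<Sum>i<n. sc (\<beta> i) (u i)) b = (\<Sum>i<n. \<beta> i * rep (u i) b)"
    if "\<And>i. i < n \<Longrightarrow> u i \<in> V.span B" for u b
  proof -
    have "rep (\<Sum>i<n. sc (\<beta> i) (u i)) = (\<lambda>b. \<Sum>i<n. rep (sc (\<beta> i) (u i)) b)"
      unfolding rep_def by (rule V.representation_sum[OF Bind]) (use that V.span_scale in auto)
    also have "\<dots> = (\<lambda>b. \<Sum>i<n. \<beta> i * rep (u i) b)"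
      unfolding rep_def using that by (simp add: V.representation_scale[OF Bind])
    finally show ?thesis by simp
  qed
  have r1: "rep (f (Jv h)) b = 0" for b
  proof (cases "b \<in> BG")
    case True
    then have "b \<in> B" using BGB by auto
    then have "(\<Sum>j<n. M b j * \<beta> j) = 0" using b2 by auto
    then show ?thesis unfolding fJh using True rep_sum[of vv b, OF vvB] by (simp add: M_def mult.commute)
  next
    case False
    then show ?thesis unfolding fJh using rep_sum[of vv b, OF vvB] by (auto intro!: sum.neutral simp: repv0)
  qed
  have fJh0: "f (Jv h) = 0"
  proof -
    have "f (Jv h) \<in> V.span B" unfolding fJh by (intro V.span_sum V.span_scale wwB vvB) auto
    then have "f (Jv h) = (\<Sum>b\<in>B. sc (rep (f (Jv h)) b) b)"
      using V.sum_representation_eq[OF Bind _ finB] unfolding rep_def by auto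
    then show ?thesis by (simp add: r1 sc_def fun_eq_iff sum_fun_apply)
  qed
  have fhspan: "f h \<in> V.span B" unfolding fh by (intro V.span_sum V.span_scale wwB) auto
  have r2: "rep (f h) b = 0" if "b \<in> B" "b \<notin> BG" for b
  proof -
    have "(\<Sum>j<n. M b j * \<beta> j) = 0" using b2 that by auto
    then show ?thesis unfolding fh using that rep_sum[of ww b, OF wwB] by (simp add: M_def mult.commute)
  qed
  have "f h = (\<Sum>b\<in>B. sc (rep (f h) b) b)"
    using V.sum_representation_eq[OF Bind fhspan finB] unfolding rep_def by auto
  also have "\<dots> = (\<Sum>b\<in>BG. sc (rep (f h) b) b)"
    by (rule sum.mono_neutral_right[OF finB BGB]) (auto simp: r2 sc_def fun_eq_iff)
  finally have eqBG: "f h = (\<Sum>b\<in>BG. sc (rep (f h) b) b)" .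
  have "f h \<in> V.span BG" by (subst eqBG, rule V.span_sum) (simp add: V.span_scale V.span_base)
  also have "V.span BG \<subseteq> V.span PV"
    using BGsub V.span_mono by blast
  also have "V.span PV = f ` V.span ((\<lambda>i. ev (2*i)) ` {..<n})"
    unfolding PV_def image_image[symmetric, of f "\<lambda>i. ev (2*i)"] by (rule module_hom.span_image[OF lin_f])
  finally obtain k where k: "k \<in> V.span ((\<lambda>i. ev (2*i)) ` {..<n})" "f h = f k" by blast
  have "Jv k \<in> Jv ` V.span ((\<lambda>i. ev (2*i)) ` {..<n})" using k by auto
  also have "\<dots> = V.span (Jv ` (\<lambda>i. ev (2*i)) ` {..<n})"
    by (rule module_hom.span_image[OF lin_Jv, symmetric])
  also have "\<dots> \<subseteq> V.span {0}"
    by (rule V.span_mono) (auto simp: Jv_even)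
  finally have Jk: "Jv k = 0" by simp
  have "Jv h = 0" using KEY[OF Jk k(2) fJh0] .
  moreover obtain i0 where i0: "i0 < n" "\<beta> i0 \<noteq> 0" using b1 by blast
  moreover have "Jv h (2*i0) = \<beta> i0"
    unfolding Jh using i0(1) by (simp add: sum_fun_apply ev_def mult.commute[of "\<beta> _"] if_distrib cong: if_cong)
  ultimately show False by simp
qed


lemma lower: "3*n \<le> r"
proof -
  define PV where "PV = (\<lambda>i. f (ev (2*i))) ` {..<n}"
  define PW where "PW = (\<lambda>i. f (ev (Suc (2*i)))) ` {..<n}"
  obtain BG where BG: "BG \<subseteq> PV" "V.independent BG" "PV \<subseteq> V.span BG"
    using V.maximal_independent_subset by blast
  obtain B where B: "BG \<subseteq> B" "B \<subseteq> PV \<union> PW" "V.independent B" "PV \<union> PW \<subseteq> V.span B"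
    using V.maximal_independent_subset_extend[of BG "PV \<union> PW"] BG by blast
  have nB: "n \<le> card B"
    using card_B[of BG B] BG B unfolding PV_def PW_def by blast
  have finB: "finite B" using B(2) finite_subset by (auto simp: PV_def PW_def)
  have Bf: "\<exists>u. b = f u" if "b \<in> B" for b using that B(2) by (auto simp: PV_def PW_def)
  define m where "m = card B"
  obtain g where g: "bij_betw g {0..<m} B" using ex_bij_betw_nat_finite[OF finB] m_def by blast
  define col where "col j = (if j < 2*n then (\<lambda>s. if s < r then z s 0 * y s j else 0) else g (j - 2*n))" for j
  have "2*n + m \<le> r"
  proof (rule ccontr)
    assume "\<not> 2*n + m \<le> r"
    then have "card {..<r} < 2*n + m" by simp
    then obtain \<beta> where b1: "\<exists>j<2*n+m. \<beta> j \<noteq> 0"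
        and b2: "\<forall>s\<in>{..<r}. (\<Sum>j<2*n+m. (\<lambda>s j. col j s) s j * \<beta> j) = 0"
      using homog[of "{..<r}" "2*n+m" "\<lambda>s j. col j s"] by blast
    have gB: "l < m \<Longrightarrow> g l \<in> B" for l using g by (auto simp: bij_betw_def)
    have Xcol: "(\<Sum>s<r. x s i * col j s) = (if i = j then 1 else 0)" if "i < 2*n" "j < 2*n + m" for i j
    proof (cases "j < 2*n")
      case True
      have "(\<Sum>s<r. x s i * col j s) = (\<Sum>s<r. x s i * y s j * z s 0)"
        by (rule sum.cong) (auto simp: col_def True)
      then show ?thesis using H0[OF that(1) True] by simp
    next
      case False
      then have "g (j - 2*n) \<in> B" using gB that by auto
      then obtain u where u: "g (j - 2*n) = f u" using Bf by blast
      show ?thesis using False F1[OF that(1), of u] that by (simp add: col_def u)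
    qed
    have bz: "\<beta> i = 0" if "i < 2*n" for i
    proof -
      have "0 = (\<Sum>s<r. x s i * (\<Sum>j<2*n+m. col j s * \<beta> j))"
        using b2 by simp
      also have "\<dots> = (\<Sum>j<2*n+m. (\<Sum>s<r. x s i * col j s) * \<beta> j)"
        by (simp add: sum_distrib_left sum_distrib_right mult_ac sum.swap[of _ "{..<r}"])
      also have "\<dots> = (\<Sum>j<2*n+m. if i = j then \<beta> j else 0)"
        by (rule sum.cong) (auto simp: Xcol that)
      also have "\<dots> = \<beta> i" using that by simp
      finally show ?thesis by simp
    qed
    define u where "u b = \<beta> (2*n + inv_into {0..<m} g b)" for b
    have "(\<Sum>b\<in>B. sc (u b) b) = (\<Sum>l\<in>{0..<m}. sc (u (g l)) (g l))"
      using sum.reindex_bij_betw[OF g, of "\<lambda>b. sc (u b) b"] by simp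
    also have "\<dots> = (\<Sum>l\<in>{0..<m}. sc (\<beta> (2*n + l)) (col (2*n+l)))"
      by (rule sum.cong) (auto simp: u_def col_def inv_into_f_f[OF bij_betw_imp_inj_on[OF g]])
    also have "\<dots> = (\<Sum>j\<in>{2*n..<2*n+m}. sc (\<beta> j) (col j))"
    proof -
      have "(\<lambda>l. 2*n + l) ` {0..<m} = {2*n..<2*n+m}" by auto
      then show ?thesis using sum.reindex[of "\<lambda>l. 2*n + l" "{0..<m}" "\<lambda>j. sc (\<beta> j) (col j)"]
        by (simp add: inj_on_def)
    qed
    also have "\<dots> = (\<Sum>j<2*n+m. sc (\<beta> j) (col j))"
      by (rule sum.mono_neutral_left) (auto simp: bz sc_def fun_eq_iff)
    also have "\<dots> = 0"
    proof
      fix s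
      show "(\<Sum>j<2*n+m. sc (\<beta> j) (col j)) s = 0 s"
      proof (cases "s < r")
        case True
        then show ?thesis using b2 by (simp add: sum_fun_apply mult.commute)
      next
        case False
        have "col j s = 0" if "j < 2*n + m" for j
        proof (cases "j < 2*n")
          case True then show ?thesis using False by (simp add: col_def)
        next
          case c: False
          then have "g (j - 2*n) \<in> B" using gB that by auto
          then obtain u where u: "g (j - 2*n) = f u" using Bf by blast
          show ?thesis using c False by (simp add: col_def u f_supp)
        qed
        then show ?thesis by (simp add: sum_fun_apply)
      qed
    qed
    finally have comb: "(\<Sum>b\<in>B. sc (u b) b) = 0" .
    have u0: "u b = 0" if "b \<in> B" for b
      using B(3) comb that finB unfolding V.independent_explicit_finite_subsets by blast
    obtain j where j: "j < 2*n + m" "\<beta> j \<noteq> 0" using b1 by blast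
    then have "\<not> j < 2*n" using bz by auto
    then have "j - 2*n < m" "u (g (j - 2*n)) = \<beta> j"
      using j by (auto simp: u_def inv_into_f_f[OF bij_betw_imp_inj_on[OF g]])
    then show False using u0[OF gB] j by auto
  qed
  then show ?thesis using nB m_def by simp
qed

end


lemma ident_lower:
  fixes N r :: nat and x y z :: "nat \<Rightarrow> nat \<Rightarrow> complex"
  assumes "\<forall>i<N. \<forall>j<N. (\<Sum>s<r. x s i * y s j * z s (0::nat)) = (if i = j then 1 else (0::complex))"
  shows "N \<le> r"
proof (rule ccontr)
  assume "\<not> N \<le> r"
  then have "card {..<r} < N" by simp
  then obtain \<beta> where b1: "\<exists>j<N. \<beta> j \<noteq> 0"
      and b2: "\<forall>s\<in>{..<r}. (\<Sum>j<N. (z s 0 * y s j) * \<beta> j) = 0"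
    using homog[of "{..<r}" N "\<lambda>s j. z s 0 * y s j"] by blast
  obtain i where i: "i < N" "\<beta> i \<noteq> 0" using b1 by blast
  have "0 = (\<Sum>s<r. x s i * (\<Sum>j<N. (z s 0 * y s j) * \<beta> j))" using b2 by simp
  also have "\<dots> = (\<Sum>j<N. (\<Sum>s<r. x s i * y s j * z s 0) * \<beta> j)"
    by (simp add: sum_distrib_left sum_distrib_right mult_ac sum.swap[of _ "{..<r}"])
  also have "\<dots> = (\<Sum>j<N. if i = j then \<beta> j else 0)"
    by (rule sum.cong) (use assms i in auto)
  also have "\<dots> = \<beta> i" using i by simp
  finally show False using i by simp
qed

lemma sum_split_add: fixes g :: "nat \<Rightarrow> 'a::comm_monoid_add" shows "(\<Sum>s<a+b. g s) = (\<Sum>s<a. g s) + (\<Sum>l<b. g (a + l))"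
  by (induction b) (simp_all add: add_ac)

definition Atens :: tensor3 where
  "Atens i j k = (if k = 0 then (if i = j then 1 else 0) else Jm i j)"

definition epsq :: "nat \<Rightarrow> complex" where "epsq t = 1 / of_nat (Suc t)"

definition Atseq :: "nat \<Rightarrow> tensor3" where
  "Atseq t i j k = (if k = 0 then (if i = j then 1 else 0)
                    else Jm i j + (if i = j \<and> odd i then epsq t else 0))"

lemma Jm_sum: "i < 2*n \<Longrightarrow> (\<Sum>l<n. (if i = 2*l then 1 else 0) * (if j = Suc (2*l) then 1 else 0)) = Jm i j"
proof -
  assume i: "i < 2*n"
  have "(\<Sum>l<n. (if i = 2*l then 1 else 0) * (if j = Suc (2*l) then 1 else (0::complex)))
      = (\<Sum>l<n. if l = i div 2 then (if even i \<and> j = Suc i then 1 else 0) else 0)"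
    by (rule sum.cong) auto
  moreover have "i div 2 < n" using i by auto
  ultimately show ?thesis by (simp add: Jm_def)
qed

lemma A_decomp:
  "sum_of_elementary (2*n) (2*n) 2 (3*n) Atens"
proof -
  define xA where "xA s = ev (if s < 2*n then s else 2*(s-2*n))" for s
  define yA where "yA s = ev (if s < 2*n then s else Suc (2*(s-2*n)))" for s
  define zA where "zA s k = (if s < 2*n then (if k = 0 then 1 else 0) else (if k = 0 then 0 else (1::complex)))" for s k :: nat
  have "Atens i j k = (\<Sum>s<3*n. xA s i * yA s j * zA s k)" if "i < 2*n" "j < 2*n" "k < 2" for i j k
  proof -
    have "(\<Sum>s<3*n. xA s i * yA s j * zA s k) = (\<Sum>s<2*n+n. xA s i * yA s j * zA s k)" by simp
    also have "\<dots> = (\<Sum>s<2*n. xA s i * yA s j * zA s k) + (\<Sum>l<n. xA (2*n+l) i * yA (2*n+l) j * zA (2*n+l) k)"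
      by (rule sum_split_add)
    also have "(\<Sum>s<2*n. xA s i * yA s j * zA s k) = (\<Sum>s<2*n. if s = i then (if i = j \<and> k = 0 then 1 else 0) else 0)"
      by (rule sum.cong) (auto simp: xA_def yA_def zA_def ev_def)
    also have "\<dots> = (if i = j \<and> k = 0 then 1 else 0)" using that by simp
    also have "(\<Sum>l<n. xA (2*n+l) i * yA (2*n+l) j * zA (2*n+l) k)
        = (if k = 0 then 0 else (\<Sum>l<n. (if i = 2*l then 1 else 0) * (if j = Suc (2*l) then 1 else 0)))"
      by (auto simp: xA_def yA_def zA_def ev_def intro!: sum.cong)
    also have "\<dots> = (if k = 0 then 0 else Jm i j)" using Jm_sum[OF that(1)] by simp
    finally show ?thesis using that by (auto simp: Atens_def)
  qed
  then show ?thesis unfolding sum_of_elementary_def by blast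
qed

lemma two_terms:
  fixes G :: "nat \<Rightarrow> complex" and X :: "nat \<Rightarrow> nat \<Rightarrow> complex"
  assumes i: "i < 2*n" and X0: "\<And>s. s div 2 \<noteq> i div 2 \<Longrightarrow> X s i = 0"
  shows "(\<Sum>s<2*n. X s i * G s) = X (2*(i div 2)) i * G (2*(i div 2)) + X (Suc (2*(i div 2))) i * G (Suc (2*(i div 2)))"
proof -
  have "Suc (2*(i div 2)) < 2*n" using i by presburger
  then have sub: "{2*(i div 2), Suc (2*(i div 2))} \<subseteq> {..<2*n}" by auto
  have "(\<Sum>s<2*n. X s i * G s) = (\<Sum>s\<in>{2*(i div 2), Suc (2*(i div 2))}. X s i * G s)"
  proof (rule sum.mono_neutral_right[OF _ sub])
    show "\<forall>s\<in>{..<2 * n} - {2 * (i div 2), Suc (2 * (i div 2))}. X s i * G s = 0"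
    proof
      fix s assume s: "s \<in> {..<2 * n} - {2 * (i div 2), Suc (2 * (i div 2))}"
      have "s div 2 \<noteq> i div 2"
      proof
        assume "s div 2 = i div 2"
        then have "s = 2*(i div 2) \<or> s = Suc (2*(i div 2))" by presburger
        then show False using s by auto
      qed
      then show "X s i * G s = 0" using X0 by simp
    qed
  qed simp
  then show ?thesis by simp
qed

lemma As_decomp:
  "sum_of_elementary (2*n) (2*n) 2 (2*n) (Atseq t)"
proof -
  define q :: complex where "q = of_nat (Suc t)"
  define e where "e = epsq t"
  have qnz: "q \<noteq> 0" unfolding q_def by (metis of_nat_eq_0_iff nat.distinct(1))
  have "e = 1 / q" by (simp add: e_def epsq_def q_def)
  then have eq: "e * q = 1" using qnz by simp
  define xS where "xS s i = (if i = 2*(s div 2) then 1 else if odd s \<and> i = Suc (2*(s div 2)) then e else 0)" for s i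
  define yS where "yS s j = (if even s then (if j = s then 1 else if j = Suc s then -q else 0)
                               else (if j = s then q else 0))" for s j
  define zS where "zS s k = (if k = 0 then 1 else if even s then 0 else e)" for s k :: nat
  have "Atseq t i j k = (\<Sum>s<2*n. xS s i * yS s j * zS s k)" if "i < 2*n" "j < 2*n" "k < 2" for i j k
  proof -
    have "(\<Sum>s<2*n. xS s i * yS s j * zS s k) = (\<Sum>s<2*n. xS s i * (yS s j * zS s k))"
      by (simp add: mult_ac)
    also have "\<dots> = xS (2*(i div 2)) i * (yS (2*(i div 2)) j * zS (2*(i div 2)) k) +
                     xS (Suc (2*(i div 2))) i * (yS (Suc (2*(i div 2))) j * zS (Suc (2*(i div 2))) k)"
      by (rule two_terms[OF that(1)]) (auto simp: xS_def)
    also have "\<dots> = Atseq t i j k"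
    proof (cases "even i")
      case True
      then have ii: "2*(i div 2) = i" by simp
      show ?thesis unfolding ii using True that eq
        by (auto simp: xS_def yS_def zS_def Atseq_def Jm_def e_def algebra_simps)
    next
      case False
      then have ii: "Suc (2*(i div 2)) = i" by presburger
      have ii2: "2*(i div 2) \<noteq> i" using False by presburger
      show ?thesis unfolding ii using False ii2 that eq
        by (auto simp: xS_def yS_def zS_def Atseq_def Jm_def e_def algebra_simps)
    qed
    finally show ?thesis by simp
  qed
  then show ?thesis unfolding sum_of_elementary_def by blast
qed


lemma rank_A: "tensor_rank (2*n) (2*n) 2 Atens = 3*n"
  unfolding tensor_rank_def
proof (rule Least_equality)
  show "sum_of_elementary (2*n) (2*n) 2 (3*n) Atens" by (rule A_decomp)
next
  fix r assume "sum_of_elementary (2*n) (2*n) 2 r Atens"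
  then obtain x y z :: "nat \<Rightarrow> nat \<Rightarrow> complex" where
    d: "\<forall>i<2*n. \<forall>j<2*n. \<forall>k<2. Atens i j k = (\<Sum>s<r. x s i * y s j * z s k)"
    unfolding sum_of_elementary_def by blast
  interpret LB n r x y z
  proof
    fix i j assume ij: "i < 2*n" "j < 2*n"
    have "Atens i j 0 = (\<Sum>s<r. x s i * y s j * z s 0)" "Atens i j 1 = (\<Sum>s<r. x s i * y s j * z s 1)"
      using d ij by auto
    then show "(\<Sum>s<r. x s i * y s j * z s 0) = (if i = j then 1 else 0)"
      and "(\<Sum>s<r. x s i * y s j * z s 1) = Jm i j"
      by (auto simp: Atens_def)
  qed
  show "3*n \<le> r" by (rule lower)
qed

lemma rank_As: "tensor_rank (2*n) (2*n) 2 (Atseq t) = 2*n"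
  unfolding tensor_rank_def
proof (rule Least_equality)
  show "sum_of_elementary (2*n) (2*n) 2 (2*n) (Atseq t)" by (rule As_decomp)
next
  fix r assume "sum_of_elementary (2*n) (2*n) 2 r (Atseq t)"
  then obtain x y z :: "nat \<Rightarrow> nat \<Rightarrow> complex" where
    d: "\<forall>i<2*n. \<forall>j<2*n. \<forall>k<2. Atseq t i j k = (\<Sum>s<r. x s i * y s j * z s k)"
    unfolding sum_of_elementary_def by blast
  have "\<forall>i<2*n. \<forall>j<2*n. (\<Sum>s<r. x s i * y s j * z s 0) = (if i = j then 1 else 0)"
  proof (intro allI impI)
    fix i j assume ij: "i < 2*n" "j < 2*n"
    have "Atseq t i j 0 = (\<Sum>s<r. x s i * y s j * z s 0)" using d ij by auto
    then show "(\<Sum>s<r. x s i * y s j * z s 0) = (if i = j then 1 else 0)" by (simp add: Atseq_def)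
  qed
  then show "2*n \<le> r" by (rule ident_lower)
qed

lemma conv: "tensor_converges (2*n) (2*n) 2 Atseq Atens"
  unfolding tensor_converges_def
proof (intro allI impI)
  fix i j k :: nat
  have e: "epsq \<longlonglongrightarrow> 0"
    unfolding epsq_def using LIMSEQ_Suc[OF lim_1_over_n] by simp
  have "(\<lambda>t. Jm i j + (if i = j \<and> odd i then epsq t else 0)) \<longlonglongrightarrow> Jm i j + 0"
  proof (intro tendsto_intros)
    show "(\<lambda>t. if i = j \<and> odd i then epsq t else 0) \<longlonglongrightarrow> 0"
    proof (cases "i = j \<and> odd i")
      case True
      then have "(\<lambda>t. if i = j \<and> odd i then epsq t else 0) = epsq" by auto
      then show ?thesis using e by simp
    next
      case False
      then have "(\<lambda>t. if i = j \<and> odd i then epsq t else 0) = (\<lambda>t. 0)" by auto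
      then show ?thesis by simp
    qed
  qed
  then show "(\<lambda>t. Atseq t i j k) \<longlonglongrightarrow> Atens i j k"
    by (auto simp: Atseq_def Atens_def)
qed

theorem corollary2:
  fixes n :: nat
  assumes "n \<ge> 1"
  shows "\<exists>(A :: tensor3) (As :: nat \<Rightarrow> tensor3).
           tensor_rank (2*n) (2*n) 2 A = 3*n \<and>
           (\<forall>t. tensor_rank (2*n) (2*n) 2 (As t) = 2*n) \<and>
           tensor_converges (2*n) (2*n) 2 As A"
  using rank_A rank_As conv by blast

end
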